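(* Let $p\in[0,1/2)$, let $0<\delta<\frac12$, and let $\beta(p,\delta)$ be the smallest positive integer $\beta$ such that $1-\bigl(1-\sum_{i=\lceil\beta/2\rceil}^{\beta}\binom{\beta}{i}p^i(1-p)^{\beta-i}\bigr)^3\le\delta$. Let $\tilde m$ be a positive integer and $s=\lceil\tilde m/(3\beta(p,\delta))\rceil$, and suppose $$\frac12-\frac{\log_2 n}{2s}>\delta .$$ Then for every target, the noisy searching tree algorithm with parameters $\beta=\beta(p,\delta)$ and $\tilde m$ outputs the correct index $l^*$ with probability at least $$1-\exp\Bigl(-s\,D_e\Bigl(\tfrac12-\tfrac{\log_2 n}{2s}\,\Big\|\,\delta\Bigr)\Bigr).$$
   Context: Noisy searching problem: given sorted reals $\tilde\theta_0=-\infty<\tilde\theta_1<\cdots<\tilde\theta_{n-1}<\tilde\theta_n=+\infty$ and a target $\tilde\theta\notin\{\tilde\theta_1,\ldots,\tilde\theta_{n-1}\}$, the goal is the index $l^*\in[n]$ with $\tilde\theta_{l^*-1}<\tilde\theta<\tilde\theta_{l^*}$. Querying $\tilde\theta_j$ ($j\in[n-1]$) returns $\mathbb{1}_{\{\tilde\theta_j<\tilde\theta\}}\oplus Z$, where the $Z$'s are i.i.d. $\mathrm{Bern}(p)$ across queries. Noisy searching tree algorithm with budget $\tilde m$ and integer $\beta$: build the binary tree $T$ whose root has label $(0,n)$ and in which every node $(i,j)$ with $j-i\ge2$ has left child $(i,\lceil\frac{i+j}2\rceil)$ and right child $(\lceil\frac{i+j}2\rceil,j)$; let $s=\lceil\tilde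 m/(3\beta)\rceil$, and form $T^*$ by attaching to each leaf of $T$ a chain of $s$ nodes with the same label. Starting at the root, perform $s$ steps; at current node $(i,j)$: if $i\ne0$, query $\tilde\theta_i$ $\beta$ times and declare failure if fewer than $\lceil\beta/2\rceil$ responses equal 1; if $j\ne n$, query $\tilde\theta_j$ $\beta$ times and declare failure if at least $\lceil\beta/2\rceil$ responses equal 1. On failure move to the parent. Otherwise, if $j-i\ge2$, query $\tilde\theta_{\lceil(i+j)/2\rceil}$ $\beta$ times and move to the left child if fewer than $\lceil\beta/2\rceil$ responses equal 1, else to the right child; if $j-i=1$, move to the next node of the chain. Output $\hat l=i+1$ for the final node $(i,j)$. $D_e(a\|b)=a\ln\frac ab+(1-a)\ln\frac{1-a}{1-b}$ is the relative entropy in natural units. *)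

theory Defs
  imports "HOL-Probability.Probability"
begin

definition D_e :: "real \<Rightarrow> real \<Rightarrow> real" where
  "D_e a b = a * ln (a / b) + (1 - a) * ln ((1 - a) / (1 - b))"

definition maj_err :: "real \<Rightarrow> nat \<Rightarrow> real" where
  "maj_err p \<beta> = (\<Sum>i = nat \<lceil>real \<beta> / 2\<rceil>..\<beta>. real (\<beta> choose i) * p ^ i * (1 - p) ^ (\<beta> - i))"

definition beta_pd :: "real \<Rightarrow> real \<Rightarrow> nat" where
  "beta_pd p \<delta> = (LEAST \<beta>. 0 < \<beta> \<and> 1 - (1 - maj_err p \<beta>) ^ 3 \<le> \<delta>)"

text \<open>Number of responses equal to 1 when querying index k beta times:
  each response is the truth bit XOR an independent Bern(p) noise, so the count
  is binomial with success probability 1-p (truth bit 1) or p (truth bit 0).\<close>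
definition ones_count :: "real \<Rightarrow> nat \<Rightarrow> (nat \<Rightarrow> bool) \<Rightarrow> nat \<Rightarrow> nat pmf" where
  "ones_count p \<beta> truth k = binomial_pmf \<beta> (if truth k then 1 - p else p)"

text \<open>The state is the pth of
  nodes of T* from the current node (head) back to the root (last element);
  chain nodes below a leaf carry the same label as the leaf. Moving to the parent
  pops the head (the root has no failure tests since i = 0 and j = n).\<close>
definition nst_step :: "real \<Rightarrow> nat \<Rightarrow> nat \<Rightarrow> (nat \<Rightarrow> bool) \<Rightarrow>
    (nat \<times> nat) list \<Rightarrow> (nat \<times> nat) list pmf" where
  "nst_step p \<beta> n truth pth =
    (let i = fst (hd pth); j = snd (hd pth);
         h = nat \<lceil>real \<beta> / 2\<rceil>;
         parent = (if length pth \<le> 1 then pth else tl pth)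
     in do {
       okL \<leftarrow> (if i \<noteq> 0 then map_pmf (\<lambda>c. h \<le> c) (ones_count p \<beta> truth i)
               else return_pmf True);
       if \<not> okL then return_pmf parent else do {
         okR \<leftarrow> (if j \<noteq> n then map_pmf (\<lambda>c. c < h) (ones_count p \<beta> truth j)
                 else return_pmf True);
         if \<not> okR then return_pmf parent
         else if 2 \<le> j - i then do {
           let mid = nat \<lceil>(real i + real j) / 2\<rceil>;
           c \<leftarrow> ones_count p \<beta> truth mid;
           return_pmf (if c < h then (i, mid) # pth else (mid, j) # pth)
         }
         else return_pmf ((i, j) # pth)
       }
     })"

definition nst_output :: "real \<Rightarrow> nat \<Rightarrow> nat \<Rightarrow> nat \<Rightarrow> (nat \<Rightarrow> bool) \<Rightarrow> nat pmf" where
  "nst_output p \<beta> n s truth =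
     map_pmf (\<lambda>pth. fst (hd pth) + 1)
       (((\<lambda>M. bind_pmf M (nst_step p \<beta> n truth)) ^^ s) (return_pmf [(0, n)]))"

end

theory Submission
  imports Defs
begin

definition cont :: "nat \<Rightarrow> nat \<times> nat \<Rightarrow> bool" where
  "cont l v = (fst v < l \<and> l \<le> snd v)"

definition child :: "nat \<times> nat \<Rightarrow> nat \<times> nat \<Rightarrow> bool" where
  "child w v = (if 2 \<le> snd w - fst w then
      v = (fst w, (fst w + snd w + 1) div 2) \<or> v = ((fst w + snd w + 1) div 2, snd w)
    else v = w)"

fun valid :: "nat \<Rightarrow> (nat \<times> nat) list \<Rightarrow> bool" where
  "valid n [] = False"
| "valid n [v] = (v = (0, n))"
| "valid n (v # w # r) = (child w v \<and> valid n (w # r))"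

definition psi :: "nat \<Rightarrow> (nat \<times> nat) list \<Rightarrow> int" where
  "psi l xs = int (length (filter (\<lambda>v. \<not> cont l v) xs)) - int (length (filter (cont l) xs))"

lemma psi_Cons: "psi l (v # xs) = psi l xs + (if cont l v then -1 else 1)"
  by (simp add: psi_def)

lemma mid_eq: "nat \<lceil>(real i + real j) / 2\<rceil> = (i + j + 1) div 2"
proof -
  obtain k where k: "i + j = 2 * k \<or> i + j = 2 * k + 1" by (metis odd_two_times_div_two_succ even_two_times_div_two)
  have "\<lceil>(real i + real j) / 2\<rceil> = int ((i + j + 1) div 2)"
  proof (rule ceiling_unique)
    show "real_of_int (int ((i + j + 1) div 2)) - 1 < (real i + real j) / 2"
      using k by (auto simp flip: of_nat_add)
    show "(real i + real j) / 2 \<le> real_of_int (int ((i + j + 1) div 2))"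
      using k by (auto simp flip: of_nat_add)
  qed
  thus ?thesis by simp
qed

lemma child_bounds:
  assumes "child w v" "fst w < snd w"
  shows "fst w \<le> fst v \<and> snd v \<le> snd w \<and> fst v < snd v \<and> 2 * (snd v - fst v) \<le> snd w - fst w + 1"
  using assms unfolding child_def by (auto split: if_splits)

lemma valid_bounds: "valid n xs \<Longrightarrow> 1 \<le> n \<Longrightarrow> v \<in> set xs \<Longrightarrow> fst v < snd v \<and> snd v \<le> n"
proof (induction n xs arbitrary: v rule: valid.induct)
  case (3 n v w r)
  then show ?case using child_bounds[of w v] by fastforce
qed auto

lemma valid_cont: "valid n (v # xs) \<Longrightarrow> 1 \<le> n \<Longrightarrow> cont l v \<Longrightarrow> w \<in> set xs \<Longrightarrow> cont l w"
proof (induction n "v # xs" arbitrary: v xs rule: valid.induct)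
  case (3 n v w' r)
  have vv: "valid n (w' # r)" using 3 by simp
  have "fst w' < snd w'" using valid_bounds[OF vv] 3 by auto
  hence "cont l w'" using child_bounds[of w' v] 3 by (auto simp: cont_def)
  then show ?case using 3 by auto
qed auto

lemma valid_tl: "valid n (v # w # r) \<Longrightarrow> valid n (w # r)" by simp

lemma valid_last_cont: "valid n xs \<Longrightarrow> 1 \<le> l \<Longrightarrow> l \<le> n \<Longrightarrow> \<exists>v\<in>set xs. cont l v"
  by (induction n xs rule: valid.induct) (auto simp: cont_def)

lemma valid_width:
  "valid n xs \<Longrightarrow> 1 \<le> n \<Longrightarrow>
    2 ^ (length xs - 1) * (snd (hd xs) - fst (hd xs)) \<le> n + 2 ^ (length xs - 1) - 1"
proof (induction n xs rule: valid.induct)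
  case (3 n v w r)
  have vv: "valid n (w # r)" using 3 by simp
  have "fst w < snd w" using valid_bounds[OF vv] 3 by auto
  hence c: "2 * (snd v - fst v) \<le> snd w - fst w + 1" using child_bounds[of w v] 3 by auto
  have IH: "2 ^ length r * (snd w - fst w) \<le> n + 2 ^ length r - 1" using 3 by simp
  have "2 ^ length (w # r) * (snd v - fst v) = 2 ^ length r * (2 * (snd v - fst v))" by simp
  also have "\<dots> \<le> 2 ^ length r * (snd w - fst w + 1)" using mult_le_mono2[OF c] by simp
  also have "\<dots> = 2 ^ length r * (snd w - fst w) + 2 ^ length r" by (simp add: algebra_simps)
  also have "\<dots> \<le> n + 2 ^ length r - 1 + 2 ^ length r" using IH by simp
  finally show ?case using 3 by simp
qed auto

lemma valid_width1:
  assumes "valid n xs" "1 \<le> n" "n \<le> 2 ^ K" "K < length xs"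
  shows "snd (hd xs) - fst (hd xs) \<le> 1"
proof (rule ccontr)
  let ?t = "length xs - 1"
  assume "\<not> ?thesis"
  hence "2 * 2 ^ ?t \<le> 2 ^ ?t * (snd (hd xs) - fst (hd xs))" by simp
  also have "\<dots> \<le> n + 2 ^ ?t - 1" using valid_width[OF assms(1,2)] .
  moreover have "(1::nat) \<le> 2 ^ ?t" by simp
  ultimately have "2 ^ ?t < n" by linarith
  moreover have "2 ^ K \<le> (2::nat) ^ ?t" using assms(4) by (intro power_increasing) auto
  ultimately show False using assms(3) by linarith
qed

lemma valid_deep:
  assumes "valid n xs" "1 \<le> n" "n \<le> 2 ^ K" "K + 2 \<le> length (filter (cont l) xs)"
  shows "\<forall>w\<in>set xs. cont l w"
  using assms
proof (induction xs)
  case Nil thus ?case by simp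
next
  case (Cons v r)
  show ?case
  proof (cases "cont l v")
    case True
    then show ?thesis using valid_cont[OF Cons(2,3) True] by auto
  next
    case False
    then obtain w r' where r: "r = w # r'" using Cons(5) by (cases r) auto
    have vr: "valid n r" using Cons(2) r by simp
    have cnt: "K + 2 \<le> length (filter (cont l) r)" using Cons(5) False by simp
    have all: "\<forall>w\<in>set r. cont l w" using Cons.IH[OF vr Cons(3,4) cnt] .
    have "K < length r" using cnt length_filter_le[of "cont l" r] by linarith
    hence "snd w - fst w \<le> 1" using valid_width1[OF vr Cons(3,4)] r by simp
    hence "v = w" using Cons(2) r by (simp add: child_def)
    thus ?thesis using all r False by simp
  qed
qed

lemma valid_success:
  assumes "valid n xs" "1 \<le> n" "n \<le> 2 ^ K" "psi l xs \<le> - int K - 1"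
  shows "fst (hd xs) + 1 = l"
proof -
  let ?b = "length (filter (\<lambda>v. \<not> cont l v) xs)" and ?g = "length (filter (cont l) xs)"
  have ge: "?b + K + 1 \<le> ?g" using assms(4) unfolding psi_def by linarith
  have all: "\<forall>w\<in>set xs. cont l w"
  proof (cases "?b = 0")
    case True
    then show ?thesis by (simp add: filter_empty_conv)
  next
    case False
    hence "K + 2 \<le> ?g" using ge by linarith
    then show ?thesis using valid_deep[OF assms(1-3)] by blast
  qed
  hence "?g = length xs" by (simp add: filter_id_conv[THEN iffD2])
  hence "K < length xs" using ge by simp
  hence w: "snd (hd xs) - fst (hd xs) \<le> 1" using valid_width1[OF assms(1-3)] by simp
  have "xs \<noteq> []" using assms(1) by auto
  hence "cont l (hd xs)" using all by simp
  thus ?thesis using w unfolding cont_def by linarith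
qed


lemma prob_bind_ge2:
  assumes "c1 \<le> measure_pmf.prob A E" "0 \<le> c2"
    and "\<And>a. a \<in> set_pmf A \<Longrightarrow> a \<in> E \<Longrightarrow> c2 \<le> measure_pmf.prob (f a) S"
  shows "c1 * c2 \<le> measure_pmf.prob (bind_pmf A f) S"
proof -
  have "ennreal (c2 * measure_pmf.prob A E) = ennreal c2 * emeasure (measure_pmf A) E"
    using assms(2) by (simp add: ennreal_mult measure_pmf.emeasure_eq_measure)
  also have "\<dots> = (\<integral>\<^sup>+a. ennreal c2 * indicator E a \<partial>measure_pmf A)"
    by (simp add: nn_integral_cmult_indicator)
  also have "\<dots> \<le> (\<integral>\<^sup>+a. emeasure (measure_pmf (f a)) S \<partial>measure_pmf A)"
  proof (rule nn_integral_mono_AE)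
    show "AE a in measure_pmf A. ennreal c2 * indicator E a \<le> emeasure (measure_pmf (f a)) S"
      unfolding AE_measure_pmf_iff
    proof safe
      fix a assume a: "a \<in> set_pmf A"
      show "ennreal c2 * indicator E a \<le> emeasure (measure_pmf (f a)) S"
      proof (cases "a \<in> E")
        case True
        then show ?thesis using assms(3)[OF a True]
          by (simp add: measure_pmf.emeasure_eq_measure)
      qed simp
    qed
  qed
  also have "\<dots> = emeasure (measure_pmf (bind_pmf A f)) S"
    by (rule emeasure_bind_pmf[symmetric])
  also have "\<dots> = ennreal (measure_pmf.prob (bind_pmf A f) S)"
    by (rule measure_pmf.emeasure_eq_measure)
  finally have "ennreal (c2 * measure_pmf.prob A E) \<le> ennreal (measure_pmf.prob (bind_pmf A f) S)" .
  hence "c2 * measure_pmf.prob A E \<le> measure_pmf.prob (bind_pmf A f) S"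
    using measure_nonneg[of "measure_pmf (bind_pmf A f)" S] by (smt (verit) ennreal_le_iff2)
  moreover have "c1 * c2 \<le> c2 * measure_pmf.prob A E"
    using mult_right_mono[OF assms(1,2)] by (simp add: mult.commute)
  ultimately show ?thesis by linarith
qed

lemma prob_bind_ge:
  assumes "\<And>a. a \<in> set_pmf A \<Longrightarrow> c \<le> measure_pmf.prob (f a) S"
  shows "c \<le> measure_pmf.prob (bind_pmf A f) S"
proof (cases "0 \<le> c")
  case True
  show ?thesis using prob_bind_ge2[of 1 A UNIV c f S] True assms by simp
next
  case False
  then show ?thesis using measure_nonneg[of "measure_pmf (bind_pmf A f)" S] by linarith
qed


lemma set_pmf_binomial_sub: "0 \<le> q \<Longrightarrow> q \<le> 1 \<Longrightarrow> set_pmf (binomial_pmf b q) \<subseteq> {..b}"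
  by (subst set_pmf_binomial_eq) auto

lemma maj_err_prob:
  assumes "0 \<le> p" "p \<le> 1"
  shows "maj_err p b = measure_pmf.prob (binomial_pmf b p) {c. nat \<lceil>real b / 2\<rceil> \<le> c}"
proof -
  let ?h = "nat \<lceil>real b / 2\<rceil>" and ?B = "binomial_pmf b p"
  have "measure_pmf.prob ?B {c. ?h \<le> c} = measure_pmf.prob ?B ({c. ?h \<le> c} \<inter> set_pmf ?B)"
    by (simp add: measure_Int_set_pmf)
  also have "{c. ?h \<le> c} \<inter> set_pmf ?B = {?h..b} \<inter> set_pmf ?B"
    using set_pmf_binomial_sub[OF assms, of b] by auto
  also have "measure_pmf.prob ?B \<dots> = measure_pmf.prob ?B {?h..b}"
    by (simp add: measure_Int_set_pmf)
  also have "\<dots> = (\<Sum>i\<in>{?h..b}. pmf ?B i)"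
    by (simp add: measure_measure_pmf_finite)
  also have "\<dots> = maj_err p b"
    unfolding maj_err_def using assms by (simp add: pmf_binomial)
  finally show ?thesis by simp
qed

lemma maj_err_bounds: "0 \<le> p \<Longrightarrow> p \<le> 1 \<Longrightarrow> 0 \<le> maj_err p b \<and> maj_err p b \<le> 1"
  using maj_err_prob[of p b] by simp

lemma prob_lt_gen: "measure_pmf.prob M {c::nat. c < h} = 1 - measure_pmf.prob M {c. h \<le> c}"
proof -
  have "{c. c < h} = UNIV - {c. h \<le> c}" by auto
  thus ?thesis using measure_pmf.prob_compl[of "{c. h \<le> c}" M] by simp
qed

lemma prob_lt_h:
  assumes "0 \<le> p" "p \<le> 1"
  shows "measure_pmf.prob (binomial_pmf b p) {c. c < nat \<lceil>real b / 2\<rceil>} = 1 - maj_err p b"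
  using maj_err_prob[OF assms, of b] prob_lt_gen by metis

lemma prob_flip_lt_h:
  assumes "0 \<le> p" "p \<le> 1"
  shows "measure_pmf.prob (binomial_pmf b (1 - p)) {c. c < nat \<lceil>real b / 2\<rceil>} \<le> maj_err p b"
proof -
  let ?h = "nat \<lceil>real b / 2\<rceil>" and ?B = "binomial_pmf b (1 - p)"
  have hb: "?h \<le> b" by linarith
  have h2: "2 * ?h \<le> b + 1" by linarith
  have "measure_pmf.prob ?B {c. c < ?h} = measure_pmf.prob ?B {..<?h}" by (simp add: lessThan_def)
  also have "\<dots> = (\<Sum>c<?h. pmf ?B c)" by (simp add: measure_measure_pmf_finite)
  also have "\<dots> = (\<Sum>c<?h. real (b choose c) * (1 - p) ^ c * p ^ (b - c))"
    using assms by (simp add: pmf_binomial)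
  also have "\<dots> = (\<Sum>c<?h. real (b choose (b - c)) * p ^ (b - c) * (1 - p) ^ (b - (b - c)))"
  proof (rule sum.cong)
    fix c assume "c \<in> {..<?h}"
    hence "c < ?h" by (simp only: lessThan_iff)
    hence "c \<le> b" using hb by linarith
    thus "real (b choose c) * (1 - p) ^ c * p ^ (b - c) =
          real (b choose (b - c)) * p ^ (b - c) * (1 - p) ^ (b - (b - c))"
      by (simp add: binomial_symmetric[symmetric])
  qed simp
  also have "\<dots> = (\<Sum>k\<in>(\<lambda>c. b - c) ` {..<?h}. real (b choose k) * p ^ k * (1 - p) ^ (b - k))"
  proof (subst sum.reindex)
    show "inj_on (\<lambda>c. b - c) {..<?h}"
    proof (rule inj_onI)
      fix x y assume "x \<in> {..<?h}" "y \<in> {..<?h}" "b - x = b - y"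
      hence "x < ?h" "y < ?h" "b - x = b - y" by (simp_all only: lessThan_iff)
      thus "x = y" using hb by linarith
    qed
  qed simp
  also have "\<dots> \<le> (\<Sum>k\<in>{?h..b}. real (b choose k) * p ^ k * (1 - p) ^ (b - k))"
  proof (rule sum_mono2)
    show "(\<lambda>c. b - c) ` {..<?h} \<subseteq> {?h..b}"
    proof
      fix k assume "k \<in> (\<lambda>c. b - c) ` {..<?h}"
      then obtain c where c: "c < ?h" "k = b - c" by auto
      thus "k \<in> {?h..b}" using c h2 hb by auto
    qed
  qed (use assms in auto)
  also have "\<dots> = maj_err p b" unfolding maj_err_def by simp
  finally show ?thesis .
qed

lemma beta_exists:
  assumes "0 \<le> p" "p < 1/2" "0 < \<delta>"
  shows "\<exists>b. 0 < b \<and> 1 - (1 - maj_err p b) ^ 3 \<le> \<delta>"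
proof -
  define \<epsilon> where "\<epsilon> = 1/2 - p"
  have eps: "0 < \<epsilon>" using assms unfolding \<epsilon>_def by simp
  obtain b :: nat where bb: "max 1 (ln (3 / \<delta>) / (2 * \<epsilon>\<^sup>2)) < real b"
    using reals_Archimedean2 by blast
  hence b0: "0 < b" and b: "ln (3 / \<delta>) / (2 * \<epsilon>\<^sup>2) < real b" by auto
  have "ln (3 / \<delta>) < real b * (2 * \<epsilon>\<^sup>2)" using b eps by (simp add: divide_less_eq)
  hence "exp (ln (3 / \<delta>)) < exp (real b * (2 * \<epsilon>\<^sup>2))" by simp
  hence "3 / \<delta> < exp (real b * (2 * \<epsilon>\<^sup>2))" using assms by simp
  hence "3 < \<delta> * exp (real b * (2 * \<epsilon>\<^sup>2))" using assms by (simp add: divide_less_eq mult.commute)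
  hence ex: "exp (- (real b * (2 * \<epsilon>\<^sup>2))) < \<delta> / 3"
  proof -
    assume a: "3 < \<delta> * exp (real b * (2 * \<epsilon>\<^sup>2))"
    have "exp (- (real b * (2 * \<epsilon>\<^sup>2))) = 1 / exp (real b * (2 * \<epsilon>\<^sup>2))"
      by (simp add: exp_minus inverse_eq_divide)
    also have "\<dots> < \<delta> / 3" using a assms by (simp add: divide_simps)
    finally show ?thesis .
  qed
  have pd: "binomial_distribution p" using assms by (simp add: binomial_distribution_def)
  let ?h = "nat \<lceil>real b / 2\<rceil>"
  have "maj_err p b = measure_pmf.prob (binomial_pmf b p) {c. ?h \<le> c}"
    using assms by (intro maj_err_prob) auto
  also have "\<dots> \<le> measure_pmf.prob (binomial_pmf b p) {x. p + \<epsilon> \<le> real x / real b}"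
  proof (rule measure_pmf.finite_measure_mono)
    show "{c. ?h \<le> c} \<subseteq> {x. p + \<epsilon> \<le> real x / real b}"
    proof
      fix c assume "c \<in> {c. ?h \<le> c}"
      hence "?h \<le> c" by (simp only: mem_Collect_eq)
      hence "real ?h \<le> real c" by (rule of_nat_mono)
      hence "real b / 2 \<le> real c" using real_nat_ceiling_ge[of "real b / 2"] by linarith
      thus "c \<in> {x. p + \<epsilon> \<le> real x / real b}" using b0 by (simp add: \<epsilon>_def field_simps)
    qed
  qed simp
  also have "\<dots> \<le> exp (real_of_int (- 2 * int b) * \<epsilon>\<^sup>2)"
    using binomial_distribution.prob_ge'[OF pd b0, of \<epsilon>] eps by simp
  also have "\<dots> = exp (- (real b * (2 * \<epsilon>\<^sup>2)))" by simp
  finally have e3: "maj_err p b < \<delta> / 3" using ex by simp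
  have eb: "0 \<le> maj_err p b" "maj_err p b \<le> 1" using maj_err_bounds[of p b] assms by auto
  have "1 - (1 - maj_err p b) ^ 3 \<le> 3 * maj_err p b"
  proof -
    define e where "e = maj_err p b"
    have "1 - (1 - e) ^ 3 = e * (3 - 3 * e + e * e)" by (simp add: power3_eq_cube algebra_simps)
    also have "\<dots> \<le> e * 3"
    proof -
      have e0: "0 \<le> e" "e \<le> 1" using eb unfolding e_def by auto
      have "e * e \<le> e" using e0 by (simp add: mult_left_le_one_le)
      hence "3 - 3 * e + e * e \<le> 3" using e0 by linarith
      thus ?thesis using mult_left_mono[of "3 - 3 * e + e * e" 3 e] e0 by simp
    qed
    finally show ?thesis unfolding e_def by simp
  qed
  thus ?thesis using e3 b0 by (intro exI[of _ b]) auto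
qed


definition testL :: "real \<Rightarrow> nat \<Rightarrow> (nat \<Rightarrow> bool) \<Rightarrow> nat \<Rightarrow> bool pmf" where
  "testL p b truth i = (if i \<noteq> 0 then map_pmf (\<lambda>c. nat \<lceil>real b / 2\<rceil> \<le> c) (ones_count p b truth i)
               else return_pmf True)"

definition testR :: "real \<Rightarrow> nat \<Rightarrow> nat \<Rightarrow> (nat \<Rightarrow> bool) \<Rightarrow> nat \<Rightarrow> bool pmf" where
  "testR p b n truth j = (if j \<noteq> n then map_pmf (\<lambda>c. c < nat \<lceil>real b / 2\<rceil>) (ones_count p b truth j)
               else return_pmf True)"

definition par :: "(nat \<times> nat) list \<Rightarrow> (nat \<times> nat) list" where
  "par pth = (if length pth \<le> 1 then pth else tl pth)"

lemma step_unfold: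
  assumes "hd pth = (i, j)"
  shows "nst_step p b n truth pth =
    bind_pmf (testL p b truth i) (\<lambda>okL. if \<not> okL then return_pmf (par pth) else
      bind_pmf (testR p b n truth j) (\<lambda>okR. if \<not> okR then return_pmf (par pth) else
        if 2 \<le> j - i then bind_pmf (ones_count p b truth ((i + j + 1) div 2))
          (\<lambda>c. return_pmf (if c < nat \<lceil>real b / 2\<rceil> then (i, (i + j + 1) div 2) # pth
                             else ((i + j + 1) div 2, j) # pth))
        else return_pmf ((i, j) # pth)))"
  unfolding nst_step_def testL_def testR_def par_def Let_def mid_eq assms fst_conv snd_conv
  by simp


lemma vim_le: "(\<lambda>c::nat. H \<le> c) -` {True} = {c. H \<le> c}" by (rule set_eqI) simp
lemma vim_le_F: "(\<lambda>c::nat. H \<le> c) -` {False} = {c. c < H}" by (rule set_eqI) (simp add: not_le)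
lemma vim_lt: "(\<lambda>c::nat. c < H) -` {True} = {c. c < H}" by (rule set_eqI) simp
lemma vim_lt_F: "(\<lambda>c::nat. c < H) -` {False} = {c. H \<le> c}" by (rule set_eqI) (simp add: not_less)

lemma prob_map_le: "measure_pmf.prob (map_pmf (\<lambda>c::nat. H \<le> c) M) {True} = measure_pmf.prob M {c. H \<le> c}"
  by (simp only: measure_map_pmf vim_le)
lemma prob_map_le_F: "measure_pmf.prob (map_pmf (\<lambda>c::nat. H \<le> c) M) {False} = measure_pmf.prob M {c. c < H}"
  by (simp only: measure_map_pmf vim_le_F)
lemma prob_map_lt: "measure_pmf.prob (map_pmf (\<lambda>c::nat. c < H) M) {True} = measure_pmf.prob M {c. c < H}"
  by (simp only: measure_map_pmf vim_lt)
lemma prob_map_lt_F: "measure_pmf.prob (map_pmf (\<lambda>c::nat. c < H) M) {False} = measure_pmf.prob M {c. H \<le> c}"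
  by (simp only: measure_map_pmf vim_lt_F)

lemma aux_ineq: "(A::real) = 1 - B \<Longrightarrow> A \<le> e \<Longrightarrow> 1 - e \<le> B" by linarith

locale srch =
  fixes p :: real and b n l :: nat and truth :: "nat \<Rightarrow> bool"
  assumes p0: "0 \<le> p" and p1: "p \<le> 1" and n1: "1 \<le> n" and l1: "1 \<le> l" and ln: "l \<le> n"
    and tr: "\<And>k. 1 \<le> k \<Longrightarrow> k < n \<Longrightarrow> truth k = (k < l)"
begin

lemma e_bounds: "0 \<le> maj_err p b" "maj_err p b \<le> 1"
  using maj_err_bounds[OF p0 p1, of b] by auto

lemma tst_true:
  assumes "1 \<le> k" "k < n" "k < l"
  shows "1 - maj_err p b \<le> measure_pmf.prob (ones_count p b truth k) {c. nat \<lceil>real b / 2\<rceil> \<le> c}"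
proof -
  have oc: "ones_count p b truth k = binomial_pmf b (1 - p)"
    using tr[OF assms(1,2)] assms(3) by (simp add: ones_count_def)
  show ?thesis unfolding oc
    by (rule aux_ineq[OF prob_lt_gen prob_flip_lt_h[OF p0 p1]])
qed

lemma tst_false:
  assumes "1 \<le> k" "k < n" "l \<le> k"
  shows "1 - maj_err p b \<le> measure_pmf.prob (ones_count p b truth k) {c. c < nat \<lceil>real b / 2\<rceil>}"
proof -
  have oc: "ones_count p b truth k = binomial_pmf b p"
    using tr[OF assms(1,2)] assms(3) by (simp add: ones_count_def)
  show ?thesis unfolding oc prob_lt_h[OF p0 p1] by (rule order_refl)
qed

lemma L_true:
  assumes "i = 0 \<or> (1 \<le> i \<and> i < n \<and> i < l)"
  shows "1 - maj_err p b \<le> measure_pmf.prob (testL p b truth i) {True}"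
proof (cases "i = 0")
  case True
  then show ?thesis using e_bounds by (simp add: testL_def)
next
  case False
  hence eq: "testL p b truth i = map_pmf (\<lambda>c. nat \<lceil>real b / 2\<rceil> \<le> c) (ones_count p b truth i)"
    unfolding testL_def by (rule if_P)
  have "1 \<le> i" "i < n" "i < l" using assms False by auto
  hence "1 - maj_err p b \<le> measure_pmf.prob (ones_count p b truth i) {c. nat \<lceil>real b / 2\<rceil> \<le> c}"
    by (rule tst_true)
  thus ?thesis unfolding eq prob_map_le .
qed

lemma L_false:
  assumes "1 \<le> i" "i < n" "l \<le> i"
  shows "1 - maj_err p b \<le> measure_pmf.prob (testL p b truth i) {False}"
proof -
  have "i \<noteq> 0" using assms by simp
  hence eq: "testL p b truth i = map_pmf (\<lambda>c. nat \<lceil>real b / 2\<rceil> \<le> c) (ones_count p b truth i)"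
    unfolding testL_def by (rule if_P)
  show ?thesis using tst_false[OF assms] unfolding eq prob_map_le_F .
qed

lemma R_true:
  assumes "j = n \<or> (1 \<le> j \<and> j < n \<and> l \<le> j)"
  shows "1 - maj_err p b \<le> measure_pmf.prob (testR p b n truth j) {True}"
proof (cases "j = n")
  case True
  then show ?thesis using e_bounds by (simp add: testR_def)
next
  case False
  hence eq: "testR p b n truth j = map_pmf (\<lambda>c. c < nat \<lceil>real b / 2\<rceil>) (ones_count p b truth j)"
    unfolding testR_def by (rule if_P)
  have "1 \<le> j" "j < n" "l \<le> j" using assms False by auto
  hence "1 - maj_err p b \<le> measure_pmf.prob (ones_count p b truth j) {c. c < nat \<lceil>real b / 2\<rceil>}"
    by (rule tst_false)
  thus ?thesis unfolding eq prob_map_lt .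
qed

lemma R_false:
  assumes "1 \<le> j" "j < n" "j < l"
  shows "1 - maj_err p b \<le> measure_pmf.prob (testR p b n truth j) {False}"
proof -
  have "j \<noteq> n" using assms by simp
  hence eq: "testR p b n truth j = map_pmf (\<lambda>c. c < nat \<lceil>real b / 2\<rceil>) (ones_count p b truth j)"
    unfolding testR_def by (rule if_P)
  show ?thesis using tst_true[OF assms] unfolding eq prob_map_lt_F .
qed

lemma cont_root: "cont l (0, n)" using l1 ln by (simp add: cont_def)

lemma step_set:
  assumes "hd pth = (i, j)" "x \<in> set_pmf (nst_step p b n truth pth)"
  shows "x = par pth \<or> (2 \<le> j - i \<and> (x = (i, (i + j + 1) div 2) # pth \<or> x = ((i + j + 1) div 2, j) # pth))
         \<or> (\<not> 2 \<le> j - i \<and> x = (i, j) # pth)"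
  using assms(2) unfolding step_unfold[OF assms(1)]
  by (auto simp: set_bind_pmf split: if_splits)

lemma step_valid:
  assumes "valid n pth" "x \<in> set_pmf (nst_step p b n truth pth)"
  shows "valid n x \<and> psi l x \<le> psi l pth + 1"
proof -
  obtain i j where hij: "hd pth = (i, j)" by (cases "hd pth") auto
  obtain r where pth: "pth = (i, j) # r" using assms(1) hij by (cases pth) auto
  have push: "valid n (u # pth) \<and> psi l (u # pth) \<le> psi l pth + 1" if "child (i, j) u" for u
  proof -
    have v: "valid n (u # pth)" using that assms(1) unfolding pth by (simp only: valid.simps)
    have "psi l (u # pth) \<le> psi l pth + 1" by (simp add: psi_Cons)
    thus ?thesis using v by simp
  qed
  from step_set[OF hij assms(2)] show ?thesis
  proof (elim disjE conjE)
    assume x: "x = par pth"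
    show ?thesis
    proof (cases r)
      case Nil thus ?thesis using x assms(1) pth by (simp add: par_def)
    next
      case (Cons w r')
      hence x': "x = w # r'" using x pth by (simp add: par_def)
      have "valid n x" using assms(1) unfolding pth Cons x' by (simp only: valid.simps)
      moreover have "psi l x \<le> psi l pth + 1" unfolding pth Cons x' by (simp add: psi_Cons)
      ultimately show ?thesis by simp
    qed
  next
    assume a: "2 \<le> j - i" "x = (i, (i + j + 1) div 2) # pth"
    have "child (i, j) (i, (i + j + 1) div 2)" using a(1) by (simp add: child_def)
    thus ?thesis using push a(2) by blast
  next
    assume a: "2 \<le> j - i" "x = ((i + j + 1) div 2, j) # pth"
    have "child (i, j) ((i + j + 1) div 2, j)" using a(1) by (simp add: child_def)
    thus ?thesis using push a(2) by blast
  next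
    assume a: "\<not> 2 \<le> j - i" "x = (i, j) # pth"
    have "child (i, j) (i, j)" using a(1) by (simp add: child_def)
    thus ?thesis using push a(2) by blast
  qed
qed

end

context srch
begin

lemma step_good:
  assumes V: "valid n pth"
  shows "(1 - maj_err p b) ^ 3 \<le> measure_pmf.prob (nst_step p b n truth pth) {x. psi l x \<le> psi l pth - 1}"
proof -
  let ?e = "maj_err p b"
  let ?S = "{x. psi l x \<le> psi l pth - 1}"
  let ?h = "nat \<lceil>real b / 2\<rceil>"
  have e0: "0 \<le> ?e" "?e \<le> 1" using e_bounds by auto
  obtain i j where hij: "hd pth = (i, j)" by (cases "hd pth") auto
  obtain r where pth: "pth = (i, j) # r" using V hij by (cases pth) auto
  have bnd: "i < j" "j \<le> n" using valid_bounds[OF V n1, of "(i, j)"] pth by auto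
  have e3: "(1 - ?e) ^ 3 \<le> 1 - ?e"
  proof -
    have "(1 - ?e) ^ 2 \<le> 1" using e0 by (intro power_le_one) auto
    hence "(1 - ?e) * (1 - ?e) ^ 2 \<le> (1 - ?e) * 1" using e0 by (intro mult_left_mono) auto
    thus ?thesis by (simp add: power3_eq_cube power2_eq_square)
  qed
  have ret1: "1 - ?e \<le> measure_pmf.prob (return_pmf x) ?S" if "x \<in> ?S" for x
    using that e0 by simp
  have push_in: "u # pth \<in> ?S" if "cont l u" for u using that by (simp add: psi_Cons)
  show ?thesis
  proof (cases "cont l (i, j)")
    case False
    obtain w r' where r: "r = w # r'"
    proof (cases r)
      case Nil
      hence "(i, j) = (0, n)" using V pth by simp
      thus ?thesis using False cont_root by simp
    qed
    have parS: "par pth \<in> ?S" using False by (simp add: par_def pth r psi_Cons)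
    have "1 - ?e \<le> measure_pmf.prob (nst_step p b n truth pth) ?S"
    proof (cases "l \<le> i")
      case True
      have i: "1 \<le> i" "i < n" using True l1 bnd by auto
      have "(1 - ?e) * 1 \<le> measure_pmf.prob (nst_step p b n truth pth) ?S"
        unfolding step_unfold[OF hij]
      proof (rule prob_bind_ge2[where E = "{False}"])
        show "1 - ?e \<le> measure_pmf.prob (testL p b truth i) {False}"
          by (rule L_false[OF i True])
      qed (use parS in auto)
      thus ?thesis by simp
    next
      case False
      hence j: "1 \<le> j" "j < n" "j < l" using \<open>\<not> cont l (i, j)\<close> bnd ln by (auto simp: cont_def)
      show ?thesis
        unfolding step_unfold[OF hij]
      proof (rule prob_bind_ge)
        fix a assume "a \<in> set_pmf (testL p b truth i)"
        show "1 - ?e \<le> measure_pmf.prob (if \<not> a then return_pmf (par pth) else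
          bind_pmf (testR p b n truth j) (\<lambda>okR. if \<not> okR then return_pmf (par pth) else
            if 2 \<le> j - i then bind_pmf (ones_count p b truth ((i + j + 1) div 2))
              (\<lambda>c. return_pmf (if c < ?h then (i, (i + j + 1) div 2) # pth
                                 else ((i + j + 1) div 2, j) # pth))
            else return_pmf ((i, j) # pth))) ?S"
        proof (cases a)
          case False
          then show ?thesis using ret1[OF parS] by simp
        next
          case True
          have "(1 - ?e) * 1 \<le> measure_pmf.prob (
            bind_pmf (testR p b n truth j) (\<lambda>okR. if \<not> okR then return_pmf (par pth) else
              if 2 \<le> j - i then bind_pmf (ones_count p b truth ((i + j + 1) div 2))
                (\<lambda>c. return_pmf (if c < ?h then (i, (i + j + 1) div 2) # pth
                                   else ((i + j + 1) div 2, j) # pth))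
              else return_pmf ((i, j) # pth))) ?S"
          proof (rule prob_bind_ge2[where E = "{False}"])
            show "1 - ?e \<le> measure_pmf.prob (testR p b n truth j) {False}"
              by (rule R_false[OF j])
          qed (use parS in auto)
          then show ?thesis using True by simp
        qed
      qed
    qed
    thus ?thesis using e3 by linarith
  next
    case True
    hence c: "i < l" "l \<le> j" by (auto simp: cont_def)
    have "(1 - ?e) * ((1 - ?e) * (1 - ?e)) \<le> measure_pmf.prob (nst_step p b n truth pth) ?S"
      unfolding step_unfold[OF hij]
    proof (rule prob_bind_ge2[where E = "{True}"])
      show "1 - ?e \<le> measure_pmf.prob (testL p b truth i) {True}"
      proof -
        have "i = 0 \<or> (1 \<le> i \<and> i < n \<and> i < l)" using c bnd by (cases "i = 0") auto
        thus ?thesis by (rule L_true)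
      qed
      show "0 \<le> (1 - ?e) * (1 - ?e)" using e0 by simp
    next
      fix a assume "a \<in> {True}"
      hence a: "a = True" by simp
      have "(1 - ?e) * (1 - ?e) \<le> measure_pmf.prob (
            bind_pmf (testR p b n truth j) (\<lambda>okR. if \<not> okR then return_pmf (par pth) else
              if 2 \<le> j - i then bind_pmf (ones_count p b truth ((i + j + 1) div 2))
                (\<lambda>c. return_pmf (if c < ?h then (i, (i + j + 1) div 2) # pth
                                   else ((i + j + 1) div 2, j) # pth))
              else return_pmf ((i, j) # pth))) ?S"
      proof (rule prob_bind_ge2[where E = "{True}"])
        show "1 - ?e \<le> measure_pmf.prob (testR p b n truth j) {True}"
        proof -
          have "j = n \<or> (1 \<le> j \<and> j < n \<and> l \<le> j)" using c bnd l1 by (cases "j = n") auto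
          thus ?thesis by (rule R_true)
        qed
        show "0 \<le> 1 - ?e" using e0 by simp
      next
        fix a' assume "a' \<in> {True}"
        hence a': "a' = True" by simp
        show "1 - ?e \<le> measure_pmf.prob (if \<not> a' then return_pmf (par pth) else
              if 2 \<le> j - i then bind_pmf (ones_count p b truth ((i + j + 1) div 2))
                (\<lambda>c. return_pmf (if c < ?h then (i, (i + j + 1) div 2) # pth
                                   else ((i + j + 1) div 2, j) # pth))
              else return_pmf ((i, j) # pth)) ?S"
        proof (cases "2 \<le> j - i")
          case w2: True
          define mid where "mid = (i + j + 1) div 2"
          have m: "i < mid" "mid < j" using w2 unfolding mid_def by auto
          have m1: "1 \<le> mid" "mid < n" using m bnd by auto
          have "(1 - ?e) * 1 \<le> measure_pmf.prob (bind_pmf (ones_count p b truth mid)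
                (\<lambda>c. return_pmf (if c < ?h then (i, mid) # pth else (mid, j) # pth))) ?S"
          proof (cases "l \<le> mid")
            case True
            show ?thesis
            proof (rule prob_bind_ge2[where E = "{c. c < ?h}"])
              show "1 - ?e \<le> measure_pmf.prob (ones_count p b truth mid) {c. c < ?h}"
                by (rule tst_false[OF m1 True])
            next
              fix c assume "c \<in> {c. c < ?h}"
              hence "c < ?h" by (simp only: mem_Collect_eq)
              moreover have "(i, mid) # pth \<in> ?S" using push_in[of "(i, mid)"] c True by (simp add: cont_def)
              ultimately show "1 \<le> measure_pmf.prob (return_pmf (if c < ?h then (i, mid) # pth else (mid, j) # pth)) ?S"
                by simp
            qed simp
          next
            case False
            show ?thesis
            proof (rule prob_bind_ge2[where E = "{c. ?h \<le> c}"])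
              show "1 - ?e \<le> measure_pmf.prob (ones_count p b truth mid) {c. ?h \<le> c}"
                using False by (intro tst_true[OF m1]) simp
            next
              fix c assume "c \<in> {c. ?h \<le> c}"
              hence "\<not> c < ?h" by (simp only: mem_Collect_eq not_less)
              moreover have "(mid, j) # pth \<in> ?S" using push_in[of "(mid, j)"] c False by (simp add: cont_def)
              ultimately show "1 \<le> measure_pmf.prob (return_pmf (if c < ?h then (i, mid) # pth else (mid, j) # pth)) ?S"
                by simp
            qed simp
          qed
          then show ?thesis using a' w2 unfolding mid_def by simp
        next
          case False
          have "(i, j) # pth \<in> ?S" using push_in True by simp
          then show ?thesis using a' False ret1 by simp
        qed
      qed
      then show "(1 - ?e) * (1 - ?e) \<le> measure_pmf.prob (if \<not> a then return_pmf (par pth) else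
          bind_pmf (testR p b n truth j) (\<lambda>okR. if \<not> okR then return_pmf (par pth) else
            if 2 \<le> j - i then bind_pmf (ones_count p b truth ((i + j + 1) div 2))
              (\<lambda>c. return_pmf (if c < ?h then (i, (i + j + 1) div 2) # pth
                                 else ((i + j + 1) div 2, j) # pth))
            else return_pmf ((i, j) # pth))) ?S" using a by simp
    qed
    thus ?thesis by (simp add: power3_eq_cube)
  qed
qed

end

context srch
begin

lemma mgf_step:
  assumes V: "valid n pth" and z: "1 < z" and d0: "0 \<le> \<delta>"
    and dlt: "1 - \<delta> \<le> (1 - maj_err p b) ^ 3"
  shows "(\<integral>\<^sup>+x. ennreal (z powr real_of_int (psi l x)) \<partial>measure_pmf (nst_step p b n truth pth))
         \<le> ennreal (z powr real_of_int (psi l pth) * ((1 - \<delta>) / z + \<delta> * z))"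
proof -
  let ?M = "nst_step p b n truth pth"
  let ?G = "{x. psi l x \<le> psi l pth - 1}"
  let ?a = "real_of_int (psi l pth)"
  define c1 where "c1 = z powr (?a - 1)"
  define c2 where "c2 = z powr (?a + 1)"
  define q where "q = measure_pmf.prob ?M ?G"
  have q: "1 - \<delta> \<le> q" using step_good[OF V] dlt unfolding q_def by linarith
  have q1: "q \<le> 1" unfolding q_def by simp
  have c1: "0 < c1" "c1 \<le> c2" unfolding c1_def c2_def using z by (auto intro: powr_mono)
  have ae: "AE x in measure_pmf ?M. ennreal (z powr real_of_int (psi l x))
              \<le> ennreal c1 * indicator ?G x + ennreal c2 * indicator (- ?G) x"
    unfolding AE_measure_pmf_iff
  proof safe
    fix x assume x: "x \<in> set_pmf ?M"
    have up: "psi l x \<le> psi l pth + 1" using step_valid[OF V x] by simp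
    show "ennreal (z powr real_of_int (psi l x)) \<le> ennreal c1 * indicator ?G x + ennreal c2 * indicator (- ?G) x"
    proof (cases "x \<in> ?G")
      case True
      hence "real_of_int (psi l x) \<le> ?a - 1" by simp
      hence "z powr real_of_int (psi l x) \<le> c1" unfolding c1_def using z by (intro powr_mono) auto
      thus ?thesis using True by (simp add: ennreal_leI)
    next
      case False
      have "real_of_int (psi l x) \<le> ?a + 1" using up by linarith
      hence "z powr real_of_int (psi l x) \<le> c2" unfolding c2_def using z by (intro powr_mono) auto
      thus ?thesis using False by (simp add: ennreal_leI)
    qed
  qed
  have "(\<integral>\<^sup>+x. ennreal (z powr real_of_int (psi l x)) \<partial>measure_pmf ?M)
        \<le> (\<integral>\<^sup>+x. ennreal c1 * indicator ?G x + ennreal c2 * indicator (- ?G) x \<partial>measure_pmf ?M)"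
    by (rule nn_integral_mono_AE[OF ae])
  also have "\<dots> = ennreal c1 * emeasure (measure_pmf ?M) ?G + ennreal c2 * emeasure (measure_pmf ?M) (- ?G)"
    by (simp add: nn_integral_add nn_integral_cmult_indicator)
  also have "emeasure (measure_pmf ?M) (- ?G) = ennreal (1 - q)"
    unfolding q_def measure_pmf.emeasure_eq_measure Compl_eq_Diff_UNIV
    using measure_pmf.prob_compl[of ?G ?M] by simp
  also have "emeasure (measure_pmf ?M) ?G = ennreal q"
    unfolding q_def measure_pmf.emeasure_eq_measure by simp
  also have "ennreal c1 * ennreal q + ennreal c2 * ennreal (1 - q) = ennreal (c1 * q + c2 * (1 - q))"
    using c1 q1 by (simp add: ennreal_mult ennreal_plus[symmetric] q_def)
  also have "c1 * q + c2 * (1 - q) \<le> c1 * (1 - \<delta>) + c2 * \<delta>"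
  proof -
    have "(c2 - c1) * (1 - \<delta>) \<le> (c2 - c1) * q" using c1 q by (intro mult_left_mono) auto
    thus ?thesis by (simp add: algebra_simps)
  qed
  also have "c1 * (1 - \<delta>) + c2 * \<delta> = z powr ?a * ((1 - \<delta>) / z + \<delta> * z)"
    unfolding c1_def c2_def using z by (simp add: powr_diff powr_add algebra_simps)
  finally show ?thesis by (simp add: ennreal_leI)
qed

end

definition iterX :: "real \<Rightarrow> nat \<Rightarrow> nat \<Rightarrow> (nat \<Rightarrow> bool) \<Rightarrow> nat \<Rightarrow> (nat \<times> nat) list pmf" where
  "iterX p b n truth k = ((\<lambda>M. bind_pmf M (nst_step p b n truth)) ^^ k) (return_pmf [(0, n)])"

lemma iterX_0: "iterX p b n truth 0 = return_pmf [(0, n)]" by (simp add: iterX_def)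
lemma iterX_Suc: "iterX p b n truth (Suc k) = bind_pmf (iterX p b n truth k) (nst_step p b n truth)"
  by (simp add: iterX_def)

context srch
begin

lemma iter_valid: "x \<in> set_pmf (iterX p b n truth k) \<Longrightarrow> valid n x"
proof (induction k arbitrary: x)
  case 0
  then show ?case by (simp add: iterX_0)
next
  case (Suc k)
  then obtain y where y: "y \<in> set_pmf (iterX p b n truth k)" "x \<in> set_pmf (nst_step p b n truth y)"
    by (auto simp: iterX_Suc set_bind_pmf)
  show ?case using step_valid[OF Suc.IH[OF y(1)] y(2)] by simp
qed

lemma psi_root: "psi l [(0, n)] = -1"
  using cont_root by (simp add: psi_def)

lemma iter_mgf:
  assumes z: "1 < z" and d0: "0 \<le> \<delta>" and d1: "\<delta> \<le> 1"
    and dlt: "1 - \<delta> \<le> (1 - maj_err p b) ^ 3"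
  shows "(\<integral>\<^sup>+x. ennreal (z powr real_of_int (psi l x)) \<partial>measure_pmf (iterX p b n truth k))
         \<le> ennreal (z powr (-1) * ((1 - \<delta>) / z + \<delta> * z) ^ k)"
proof (induction k)
  case 0
  then show ?case by (simp add: iterX_0 psi_root)
next
  case (Suc k)
  define \<rho> where "\<rho> = (1 - \<delta>) / z + \<delta> * z"
  have \<rho>0: "0 \<le> \<rho>" unfolding \<rho>_def using z d0 d1 by auto
  have "(\<integral>\<^sup>+x. ennreal (z powr real_of_int (psi l x)) \<partial>measure_pmf (iterX p b n truth (Suc k)))
      = (\<integral>\<^sup>+y. (\<integral>\<^sup>+x. ennreal (z powr real_of_int (psi l x)) \<partial>measure_pmf (nst_step p b n truth y))
            \<partial>measure_pmf (iterX p b n truth k))"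
    by (simp add: iterX_Suc)
  also have "\<dots> \<le> (\<integral>\<^sup>+y. ennreal (z powr real_of_int (psi l y)) * ennreal \<rho> \<partial>measure_pmf (iterX p b n truth k))"
  proof (rule nn_integral_mono_AE)
    show "AE y in measure_pmf (iterX p b n truth k).
      (\<integral>\<^sup>+x. ennreal (z powr real_of_int (psi l x)) \<partial>measure_pmf (nst_step p b n truth y))
      \<le> ennreal (z powr real_of_int (psi l y)) * ennreal \<rho>"
      unfolding AE_measure_pmf_iff
    proof safe
      fix y assume "y \<in> set_pmf (iterX p b n truth k)"
      hence vy: "valid n y" by (rule iter_valid)
      have eq: "ennreal (z powr real_of_int (psi l y)) * ennreal \<rho> = ennreal (z powr real_of_int (psi l y) * \<rho>)"
        using \<rho>0 by (simp add: ennreal_mult)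
      from mgf_step[OF vy z d0 dlt, folded \<rho>_def] show "(\<integral>\<^sup>+x. ennreal (z powr real_of_int (psi l x)) \<partial>measure_pmf (nst_step p b n truth y))
      \<le> ennreal (z powr real_of_int (psi l y)) * ennreal \<rho>"
        unfolding eq .
    qed
  qed
  also have "\<dots> = (\<integral>\<^sup>+y. ennreal (z powr real_of_int (psi l y)) \<partial>measure_pmf (iterX p b n truth k)) * ennreal \<rho>"
    by (rule nn_integral_multc) simp
  also have "\<dots> \<le> ennreal (z powr (-1) * \<rho> ^ k) * ennreal \<rho>"
    using Suc.IH unfolding \<rho>_def by (intro mult_right_mono) auto
  also have "\<dots> = ennreal (z powr (-1) * \<rho> ^ Suc k)"
    using \<rho>0 z by (simp add: ennreal_mult[symmetric] algebra_simps)
  finally show ?case unfolding \<rho>_def .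
qed

lemma fail_bound:
  assumes z: "1 < z" and d0: "0 \<le> \<delta>" and d1: "\<delta> \<le> 1"
    and dlt: "1 - \<delta> \<le> (1 - maj_err p b) ^ 3" and K: "n \<le> 2 ^ K"
  shows "1 - z powr (real K - 1) * ((1 - \<delta>) / z + \<delta> * z) ^ s
         \<le> measure_pmf.prob (map_pmf (\<lambda>pth. fst (hd pth) + 1) (iterX p b n truth s)) {l}"
proof -
  let ?M = "iterX p b n truth s"
  let ?A = "{x. - int K \<le> psi l x}"
  define \<rho> where "\<rho> = (1 - \<delta>) / z + \<delta> * z"
  have zK: "0 < z powr (- real K)" using z by simp
  have "ennreal (z powr (- real K)) * emeasure (measure_pmf ?M) ?A
        = (\<integral>\<^sup>+x. ennreal (z powr (- real K)) * indicator ?A x \<partial>measure_pmf ?M)"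
    by (simp add: nn_integral_cmult_indicator)
  also have "\<dots> \<le> (\<integral>\<^sup>+x. ennreal (z powr real_of_int (psi l x)) \<partial>measure_pmf ?M)"
  proof (rule nn_integral_mono)
    fix x
    show "ennreal (z powr (- real K)) * indicator ?A x \<le> ennreal (z powr real_of_int (psi l x))"
    proof (cases "x \<in> ?A")
      case True
      hence "- real K \<le> real_of_int (psi l x)" by simp
      hence "z powr (- real K) \<le> z powr real_of_int (psi l x)" using z by (intro powr_mono) auto
      thus ?thesis using True by (simp add: ennreal_leI)
    qed simp
  qed
  also have "\<dots> \<le> ennreal (z powr (-1) * \<rho> ^ s)"
    unfolding \<rho>_def by (rule iter_mgf[OF z d0 d1 dlt])
  finally have "ennreal (z powr (- real K) * measure_pmf.prob ?M ?A) \<le> ennreal (z powr (-1) * \<rho> ^ s)"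
    using zK by (simp add: measure_pmf.emeasure_eq_measure ennreal_mult)
  moreover have "0 \<le> z powr (-1) * \<rho> ^ s" unfolding \<rho>_def using z d0 d1 by auto
  ultimately have "z powr (- real K) * measure_pmf.prob ?M ?A \<le> z powr (-1) * \<rho> ^ s"
    by (simp add: ennreal_le_iff)
  hence "z powr real K * (z powr (- real K) * measure_pmf.prob ?M ?A) \<le> z powr real K * (z powr (-1) * \<rho> ^ s)"
    using z by (intro mult_left_mono) auto
  hence PA: "measure_pmf.prob ?M ?A \<le> z powr (real K - 1) * \<rho> ^ s"
    using z by (simp add: powr_add[symmetric] mult.assoc[symmetric] powr_diff)
  have "measure_pmf.prob ?M (UNIV - ?A) \<le> measure_pmf.prob ?M ((\<lambda>pth. fst (hd pth) + 1) -` {l})"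
  proof -
    have "measure_pmf.prob ?M (UNIV - ?A) = measure_pmf.prob ?M ((UNIV - ?A) \<inter> set_pmf ?M)"
      by (simp add: measure_Int_set_pmf)
    also have "\<dots> \<le> measure_pmf.prob ?M ((\<lambda>pth. fst (hd pth) + 1) -` {l})"
    proof (rule measure_pmf.finite_measure_mono)
      show "(UNIV - ?A) \<inter> set_pmf ?M \<subseteq> (\<lambda>pth. fst (hd pth) + 1) -` {l}"
      proof
        fix x assume x: "x \<in> (UNIV - ?A) \<inter> set_pmf ?M"
        hence v: "valid n x" using iter_valid by auto
        have "psi l x \<le> - int K - 1" using x by auto
        hence "fst (hd x) + 1 = l" by (rule valid_success[OF v n1 K])
        thus "x \<in> (\<lambda>pth. fst (hd pth) + 1) -` {l}" by simp
      qed
    qed simp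
    finally show ?thesis .
  qed
  moreover have "measure_pmf.prob ?M (UNIV - ?A) = 1 - measure_pmf.prob ?M ?A"
    using measure_pmf.prob_compl[of ?A ?M] by simp
  ultimately show ?thesis using PA unfolding \<rho>_def by simp
qed

end

lemma numeric:
  fixes a \<delta> :: real and s K :: nat
  assumes d0: "0 < \<delta>" and ad: "\<delta> < a" and a1: "a < 1" and KK: "real K - 1 \<le> real s * (1 - 2 * a)"
  defines "u \<equiv> a * (1 - \<delta>) / (\<delta> * (1 - a))"
  defines "z \<equiv> sqrt u"
  shows "1 < z" and "z powr (real K - 1) * ((1 - \<delta>) / z + \<delta> * z) ^ s \<le> exp (- real s * D_e a \<delta>)"
proof -
  have a0: "0 < a" using d0 ad by simp
  have "\<delta> * (1 - a) < a * (1 - \<delta>)" using ad by (simp add: algebra_simps)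
  hence u1: "1 < u" unfolding u_def using d0 a1 by (simp add: field_simps)
  show z1: "1 < z" unfolding z_def using u1 by simp
  have zz: "z * z = u" unfolding z_def using u1 by simp
  define C where "C = (1 - \<delta>) / (1 - a)"
  have C0: "0 < C" unfolding C_def using ad a1 by simp
  have rho: "(1 - \<delta>) / z + \<delta> * z = C / z"
  proof -
    have "(1 - \<delta>) / z + \<delta> * z = ((1 - \<delta>) + \<delta> * (z * z)) / z" using z1 by (simp add: field_simps)
    also have "(1 - \<delta>) + \<delta> * (z * z) = C" unfolding zz u_def C_def using d0 a1 by (simp add: field_simps)
    finally show ?thesis .
  qed
  have lnz: "2 * ln z = ln u" unfolding z_def using u1 by (simp add: ln_sqrt)
  have lnu: "ln u = ln a + ln (1 - \<delta>) - ln \<delta> - ln (1 - a)"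
    unfolding u_def using a0 a1 d0 ad by (simp add: ln_div ln_mult)
  have lnC: "ln C = ln (1 - \<delta>) - ln (1 - a)" unfolding C_def using a1 ad by (simp add: ln_div)
  have D: "D_e a \<delta> = a * (ln a - ln \<delta>) + (1 - a) * (ln (1 - a) - ln (1 - \<delta>))"
    unfolding D_e_def using a0 a1 d0 ad by (simp add: ln_div)
  let ?L = "z powr (real K - 1) * (C / z) ^ s"
  have Lpos: "0 < ?L" using z1 C0 by simp
  have "ln ?L = (real K - 1) * ln z + real s * (ln C - ln z)"
    using z1 C0 by (simp add: ln_mult ln_powr ln_realpow ln_div)
  also have "\<dots> = (real K - 1 - real s) * ln z + real s * ln C" by (simp add: algebra_simps)
  also have "\<dots> \<le> (- 2 * a * real s) * ln z + real s * ln C"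
  proof -
    have "real K - 1 - real s \<le> - 2 * a * real s" using KK by (simp add: algebra_simps)
    moreover have "0 \<le> ln z" using z1 by simp
    ultimately show ?thesis by (intro add_right_mono mult_right_mono) auto
  qed
  also have "\<dots> = - real s * D_e a \<delta>"
  proof -
    have "(- 2 * a * real s) * ln z = - a * real s * ln u" using lnz by (simp add: algebra_simps)
    thus ?thesis unfolding D lnC using lnu by (simp add: algebra_simps)
  qed
  finally have "ln ?L \<le> - real s * D_e a \<delta>" .
  hence "exp (ln ?L) \<le> exp (- real s * D_e a \<delta>)" by simp
  thus "z powr (real K - 1) * ((1 - \<delta>) / z + \<delta> * z) ^ s \<le> exp (- real s * D_e a \<delta>)"
    unfolding rho using Lpos by simp
qed

theorem lemma3:
  fixes p \<delta> :: real and n m lstar :: nat and theta :: "nat \<Rightarrow> real" and x :: real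
  assumes "0 \<le> p" "p < 1/2"
    and "0 < \<delta>" "\<delta> < 1/2"
    and "1 \<le> n"
    and "strict_mono_on {1..n-1} theta"
    and "x \<notin> theta ` {1..n-1}"
    and "lstar \<in> {1..n}"
    and "1 < lstar \<longrightarrow> theta (lstar - 1) < x"
    and "lstar < n \<longrightarrow> x < theta lstar"
    and "0 < m"
    and "1/2 - log 2 (real n) / (2 * real (nat \<lceil>real m / (3 * real (beta_pd p \<delta>))\<rceil>)) > \<delta>"
  shows "measure_pmf.prob
           (nst_output p (beta_pd p \<delta>) n (nat \<lceil>real m / (3 * real (beta_pd p \<delta>))\<rceil>)
              (\<lambda>k. theta k < x)) {lstar}
         \<ge> 1 - exp (- real (nat \<lceil>real m / (3 * real (beta_pd p \<delta>))\<rceil>) *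
               D_e (1/2 - log 2 (real n) / (2 * real (nat \<lceil>real m / (3 * real (beta_pd p \<delta>))\<rceil>))) \<delta>)"
proof -
  define \<beta> where "\<beta> = beta_pd p \<delta>"
  have bex: "\<exists>b. 0 < b \<and> 1 - (1 - maj_err p b) ^ 3 \<le> \<delta>"
    by (rule beta_exists) (use assms in auto)
  have \<beta>: "0 < \<beta> \<and> 1 - (1 - maj_err p \<beta>) ^ 3 \<le> \<delta>"
    unfolding \<beta>_def beta_pd_def using bex by (rule LeastI_ex)
  define s where "s = nat \<lceil>real m / (3 * real \<beta>)\<rceil>"
  have "0 < real m / (3 * real \<beta>)" using \<beta> assms(11) by simp
  hence s1: "0 < s" unfolding s_def by simp
  define a where "a = 1/2 - log 2 (real n) / (2 * real s)"
  have ad: "\<delta> < a" using assms(12) unfolding a_def s_def \<beta>_def by simp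
  have lg0: "0 \<le> log 2 (real n)" using assms(5) by simp
  have "0 \<le> log 2 (real n) / (2 * real s)" using lg0 s1 by simp
  hence a1: "a < 1" unfolding a_def by linarith
  define K where "K = nat \<lceil>log 2 (real n)\<rceil>"
  have rK: "real K = of_int \<lceil>log 2 (real n)\<rceil>" unfolding K_def using lg0 by simp
  have K1: "n \<le> 2 ^ K"
  proof -
    have "real n = 2 powr log 2 (real n)" using assms(5) by simp
    also have "\<dots> \<le> 2 powr real K" unfolding rK by (intro powr_mono) auto
    also have "\<dots> = 2 ^ K" by (simp add: powr_realpow)
    finally have "real n \<le> real ((2::nat) ^ K)" by simp
    thus ?thesis by (simp only: of_nat_le_iff)
  qed
  have K2: "real K - 1 \<le> real s * (1 - 2 * a)"
  proof -
    have "real s * (1 - 2 * a) = log 2 (real n)" unfolding a_def using s1 by (simp add: field_simps)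
    moreover have "real K < log 2 (real n) + 1" unfolding rK by linarith
    ultimately show ?thesis by linarith
  qed
  have tr: "(theta k < x) = (k < lstar)" if k: "1 \<le> k" "k < n" for k
  proof (cases "k < lstar")
    case True
    hence l1: "1 < lstar" using k by simp
    have "theta k \<le> theta (lstar - 1)"
      using True k assms(8) by (intro strict_mono_on_leD[OF assms(6)]) auto
    thus ?thesis using assms(9) l1 True by simp
  next
    case False
    hence ln: "lstar < n" using k by simp
    have "theta lstar \<le> theta k"
      using False k assms(8) by (intro strict_mono_on_leD[OF assms(6)]) auto
    thus ?thesis using assms(10) ln False by simp
  qed
  interpret S: srch p \<beta> n lstar "\<lambda>k. theta k < x"
    by unfold_locales (use assms tr in auto)
  define u where "u = a * (1 - \<delta>) / (\<delta> * (1 - a))"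
  define z where "z = sqrt u"
  have z1: "1 < z" and num: "z powr (real K - 1) * ((1 - \<delta>) / z + \<delta> * z) ^ s \<le> exp (- real s * D_e a \<delta>)"
    using numeric[OF assms(3) ad a1 K2] unfolding u_def z_def by auto
  have dlt: "1 - \<delta> \<le> (1 - maj_err p \<beta>) ^ 3" using \<beta> by linarith
  have fb: "1 - z powr (real K - 1) * ((1 - \<delta>) / z + \<delta> * z) ^ s
         \<le> measure_pmf.prob (map_pmf (\<lambda>pth. fst (hd pth) + 1) (iterX p \<beta> n (\<lambda>k. theta k < x) s)) {lstar}"
    by (rule S.fail_bound[OF z1 _ _ dlt K1]) (use assms in auto)
  have out: "nst_output p \<beta> n s (\<lambda>k. theta k < x) = map_pmf (\<lambda>pth. fst (hd pth) + 1) (iterX p \<beta> n (\<lambda>k. theta k < x) s)"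
    by (simp add: nst_output_def iterX_def)
  have "1 - exp (- real s * D_e a \<delta>) \<le> measure_pmf.prob (nst_output p \<beta> n s (\<lambda>k. theta k < x)) {lstar}"
    unfolding out using fb num by linarith
  thus ?thesis unfolding a_def s_def \<beta>_def by simp
qed


end
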